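(* Let $\mathbb{A}$ be a medial generic isospectral algebra of dimension $n$ over an algebraically closed subfield $\mathbb{K}$ of $\mathbb{C}$, let $\epsilon_n=e^{2\pi\sqrt{-1}/n}$, let $c$ be a nonzero idempotent and let $w_1\neq0$ satisfy $cw_1=\epsilon_nw_1$. Then every nonassociative monomial $w_1^{\alpha}$ in $w_1$ satisfies $w_1^{\alpha}=\epsilon_n^s\,w_1^{\deg w_1^\alpha}$ for some integer $0\le s\le n-1$ (the right side being a principal power), and for all $k,m\ge1$, $$w_1^kw_1^m=\epsilon_n^{-(k-1)(m-1)}\,w_1^{k+m}.$$
   Context: All algebras commutative, possibly nonassociative, finite-dimensional. Medial: $(xy)(zw)=(xz)(yw)$ identically. Isospectral: all nonzero idempotents $c$ have the same spectrum (multiset of eigenvalues of $L_c:x\mapsto cx$). Generic: the complexification has exactly $2^n$ idempotents (including $0$). Principal powers: $z^1=z$, $z^{k+1}=z\,z^k$. A nonassociative monomial in $z$ is an element of the commutative multiplicative groupoid generated by $z$; its degree is the number of occurrences of $z$ (e.g. $\deg z^2z^2=4$). *)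

theory Defs
  imports Complex_Main "HOL-Computational_Algebra.Polynomial" "Jordan_Normal_Form.Char_Poly"
begin

definition alg_closed_subfield :: "complex set \<Rightarrow> bool" where
  "alg_closed_subfield K \<longleftrightarrow>
     0 \<in> K \<and> 1 \<in> K \<and>
     (\<forall>x\<in>K. \<forall>y\<in>K. x + y \<in> K \<and> x - y \<in> K \<and> x * y \<in> K) \<and>
     (\<forall>x\<in>K. x \<noteq> 0 \<longrightarrow> inverse x \<in> K) \<and>
     (\<forall>p :: complex poly. (\<forall>i. coeff p i \<in> K) \<and> degree p \<ge> 1 \<longrightarrow>
        (\<exists>z\<in>K. poly p z = 0))"

text \<open>The product is given by structure
  constants gam i j k (coefficient of e_k in e_i e_j).\<close>
definition vec_space :: "complex set \<Rightarrow> nat \<Rightarrow> (nat \<Rightarrow> complex) set" where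
  "vec_space K n = {x. (\<forall>i<n. x i \<in> K) \<and> (\<forall>i\<ge>n. x i = 0)}"

definition amult :: "(nat \<Rightarrow> nat \<Rightarrow> nat \<Rightarrow> complex) \<Rightarrow> nat \<Rightarrow>
    (nat \<Rightarrow> complex) \<Rightarrow> (nat \<Rightarrow> complex) \<Rightarrow> (nat \<Rightarrow> complex)" where
  "amult gam n x y = (\<lambda>k. if k < n then (\<Sum>i<n. \<Sum>j<n. gam i j k * x i * y j) else 0)"

definition vscale :: "complex \<Rightarrow> (nat \<Rightarrow> complex) \<Rightarrow> (nat \<Rightarrow> complex)" where
  "vscale a x = (\<lambda>i. a * x i)"

definition Lmat :: "(nat \<Rightarrow> nat \<Rightarrow> nat \<Rightarrow> complex) \<Rightarrow> nat \<Rightarrow> (nat \<Rightarrow> complex) \<Rightarrow> complex mat" where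
  "Lmat gam n c = mat n n (\<lambda>(k, j). \<Sum>i<n. gam i j k * c i)"

definition medial :: "complex set \<Rightarrow> (nat \<Rightarrow> nat \<Rightarrow> nat \<Rightarrow> complex) \<Rightarrow> nat \<Rightarrow> bool" where
  "medial K gam n \<longleftrightarrow> (\<forall>x\<in>vec_space K n. \<forall>y\<in>vec_space K n. \<forall>z\<in>vec_space K n. \<forall>w\<in>vec_space K n.
      amult gam n (amult gam n x y) (amult gam n z w) = amult gam n (amult gam n x z) (amult gam n y w))"

text \<open>Isospectral: all nonzero idempotents have the same spectrum (multiset of eigenvalues
  of L_c with algebraic multiplicities), i.e. the same characteristic polynomial.\<close>
definition isospectral :: "complex set \<Rightarrow> (nat \<Rightarrow> nat \<Rightarrow> nat \<Rightarrow> complex) \<Rightarrow> nat \<Rightarrow> bool" where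
  "isospectral K gam n \<longleftrightarrow> (\<forall>c\<in>vec_space K n. \<forall>c'\<in>vec_space K n.
      c \<noteq> (\<lambda>_. 0) \<and> amult gam n c c = c \<and> c' \<noteq> (\<lambda>_. 0) \<and> amult gam n c' c' = c' \<longrightarrow>
      char_poly (Lmat gam n c) = char_poly (Lmat gam n c'))"

text \<open>Generic: the complexification has exactly 2^n idempotents (including 0).\<close>
definition generic :: "(nat \<Rightarrow> nat \<Rightarrow> nat \<Rightarrow> complex) \<Rightarrow> nat \<Rightarrow> bool" where
  "generic gam n \<longleftrightarrow> card {x \<in> vec_space UNIV n. amult gam n x x = x} = 2 ^ n"

datatype namon = Var | Prod namon namon

fun mon_eval :: "('v \<Rightarrow> 'v \<Rightarrow> 'v) \<Rightarrow> 'v \<Rightarrow> namon \<Rightarrow> 'v" where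
  "mon_eval m z Var = z"
| "mon_eval m z (Prod a b) = m (mon_eval m z a) (mon_eval m z b)"

fun mon_deg :: "namon \<Rightarrow> nat" where
  "mon_deg Var = 1"
| "mon_deg (Prod a b) = mon_deg a + mon_deg b"

text \<open>Principal powers: ppow m z k = z^k for k >= 1 (z^1 = z, z^(k+1) = z z^k);
  the value at k = 0 is a junk value (z).\<close>
fun ppow :: "('v \<Rightarrow> 'v \<Rightarrow> 'v) \<Rightarrow> 'v \<Rightarrow> nat \<Rightarrow> 'v" where
  "ppow m z 0 = z"
| "ppow m z (Suc 0) = z"
| "ppow m z (Suc (Suc k)) = m z (ppow m z (Suc k))"

end

theory Submission
  imports Defs
begin

lemma sum_in_K:
  assumes "0 \<in> K" "\<forall>x\<in>K. \<forall>y\<in>K. x + y \<in> K" "finite A" "\<forall>i\<in>A. f i \<in> K"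
  shows "sum f A \<in> K"
  using assms(3,4)
proof (induction A rule: finite_induct)
  case empty then show ?case using assms(1) by simp
next
  case (insert x F) then show ?case using assms(2) by simp
qed

lemma amult_closed:
  assumes K: "alg_closed_subfield K"
    and gamK: "\<forall>i<n. \<forall>j<n. \<forall>k<n. gam i j k \<in> K"
    and x: "x \<in> vec_space K n" and y: "y \<in> vec_space K n"
  shows "amult gam n x y \<in> vec_space K n"
proof -
  have z: "0 \<in> K" and ad: "\<forall>x\<in>K. \<forall>y\<in>K. x + y \<in> K" and mu: "\<forall>x\<in>K. \<forall>y\<in>K. x * y \<in> K"
    using K unfolding alg_closed_subfield_def by auto
  have "(\<Sum>i<n. \<Sum>j<n. gam i j k * x i * y j) \<in> K" if "k < n" for k
    apply (rule sum_in_K[OF z ad], simp, intro ballI)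
    apply (rule sum_in_K[OF z ad], simp, intro ballI)
    using mu gamK x y that unfolding vec_space_def by auto
  then show ?thesis unfolding vec_space_def amult_def by auto
qed

lemma amult_scale_l: "amult gam n (vscale a x) y = vscale a (amult gam n x y)"
  unfolding amult_def vscale_def
  by (rule ext) (simp add: sum_distrib_left algebra_simps)

lemma amult_scale_r: "amult gam n x (vscale a y) = vscale a (amult gam n x y)"
  unfolding amult_def vscale_def
  by (rule ext) (simp add: sum_distrib_left algebra_simps)

lemma vscale_vscale: "vscale a (vscale b x) = vscale (a * b) x"
  unfolding vscale_def by auto

lemma vscale_one[simp]: "vscale 1 x = x"
  unfolding vscale_def by simp

lemma vscale_cancel: "a \<noteq> 0 \<Longrightarrow> vscale a x = vscale a y \<Longrightarrow> x = y"
  unfolding vscale_def by (rule ext) (metis mult_left_cancel)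

lemma amult_comm:
  assumes "\<forall>i<n. \<forall>j<n. \<forall>k<n. gam i j k = gam j i k"
  shows "amult gam n x y = amult gam n y x"
proof (rule ext)
  fix k
  show "amult gam n x y k = amult gam n y x k"
  proof (cases "k < n")
    case True
    have "(\<Sum>i<n. \<Sum>j<n. gam i j k * x i * y j) = (\<Sum>j<n. \<Sum>i<n. gam i j k * x i * y j)"
      by (rule sum.swap)
    also have "\<dots> = (\<Sum>i<n. \<Sum>j<n. gam i j k * y i * x j)"
      using assms True by (intro sum.cong refl) (simp add: algebra_simps)
    finally show ?thesis unfolding amult_def using True by simp
  qed (simp add: amult_def)
qed

lemma ppow_Suc: "k \<ge> 1 \<Longrightarrow> ppow m z (Suc k) = m z (ppow m z k)"
  by (cases k) auto

lemma ppow_closed: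
  assumes "\<And>x y. x \<in> S \<Longrightarrow> y \<in> S \<Longrightarrow> m x y \<in> S" "z \<in> S"
  shows "ppow m z k \<in> S"
proof (induction k rule: less_induct)
  case (less k)
  show ?case
  proof (cases k)
    case (Suc j)
    then show ?thesis
    proof (cases j)
      case (Suc i)
      then show ?thesis using less \<open>k = Suc j\<close> assms by simp
    qed (use assms in simp)
  qed (use assms in simp)
qed

lemma mon_deg_pos: "mon_deg a \<ge> 1"
  by (induction a) auto

theorem proposition6p4:
  fixes K :: "complex set" and n :: nat and gam :: "nat \<Rightarrow> nat \<Rightarrow> nat \<Rightarrow> complex"
    and c w1 :: "nat \<Rightarrow> complex"
  assumes K: "alg_closed_subfield K"
    and gamK: "\<forall>i<n. \<forall>j<n. \<forall>k<n. gam i j k \<in> K"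
    and comm: "\<forall>i<n. \<forall>j<n. \<forall>k<n. gam i j k = gam j i k"
    and med: "medial K gam n"
    and gen: "generic gam n"
    and iso: "isospectral K gam n"
    and c: "c \<in> vec_space K n" "c \<noteq> (\<lambda>_. 0)" "amult gam n c c = c"
    and w1: "w1 \<in> vec_space K n" "w1 \<noteq> (\<lambda>_. 0)"
    and eig: "amult gam n c w1 = vscale (cis (2 * pi / n)) w1"
  shows "(\<forall>\<alpha>. \<exists>s::nat. s \<le> n - 1 \<and>
            mon_eval (amult gam n) w1 \<alpha> =
              vscale (cis (2 * pi / n) ^ s) (ppow (amult gam n) w1 (mon_deg \<alpha>)))
       \<and> (\<forall>k m. k \<ge> 1 \<longrightarrow> m \<ge> 1 \<longrightarrow>
            amult gam n (ppow (amult gam n) w1 k) (ppow (amult gam n) w1 m) =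
              vscale (cis (2 * pi / n) powi (- (int (k - 1) * int (m - 1))))
                (ppow (amult gam n) w1 (k + m)))"
proof -
  define M where "M = amult gam n"
  define e where "e = cis (2 * pi / n)"
  define P where "P = ppow M w1"
  define V where "V = vec_space K n"
  have e0: "e \<noteq> 0" unfolding e_def by simp
  have npos: "n > 0"
  proof (rule ccontr)
    assume "\<not> n > 0"
    then have "n = 0" by simp
    then have "w1 = (\<lambda>_. 0)" using w1(1) unfolding vec_space_def by auto
    then show False using w1(2) by simp
  qed
  have en: "e ^ n = 1" unfolding e_def DeMoivre using npos by simp
  have clo: "M x y \<in> V" if "x \<in> V" "y \<in> V" for x y
    using amult_closed[OF K gamK] that unfolding M_def V_def by blast
  have PV: "P k \<in> V" for k
    unfolding P_def by (rule ppow_closed) (use clo w1 V_def in auto)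
  have cV: "c \<in> V" using c V_def by simp
  have w1V: "w1 \<in> V" using w1 V_def by simp
  have medV: "M (M x y) (M z w) = M (M x z) (M y w)" if "x \<in> V" "y \<in> V" "z \<in> V" "w \<in> V" for x y z w
    using med that unfolding medial_def M_def V_def by blast
  have commM: "M x y = M y x" for x y unfolding M_def by (rule amult_comm[OF comm])
  have sl: "M (vscale a x) y = vscale a (M x y)" for a x y unfolding M_def by (rule amult_scale_l)
  have sr: "M x (vscale a y) = vscale a (M x y)" for a x y unfolding M_def by (rule amult_scale_r)
  have PS: "P (Suc k) = M w1 (P k)" if "k \<ge> 1" for k unfolding P_def by (rule ppow_Suc[OF that])
  have P1: "P 1 = w1" unfolding P_def by simp
  have eigM: "M c w1 = vscale e w1" using eig unfolding M_def e_def by simp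
  have eigP: "M c (P k) = vscale (e ^ k) (P k)" if "k \<ge> 1" for k
    using that
  proof (induction k rule: dec_induct)
    case base then show ?case using eigM P1 by simp
  next
    case (step k)
    have cc: "M c c = c" using c(3) unfolding M_def .
    have "M c (P (Suc k)) = M (M c c) (M w1 (P k))" using PS[OF step.hyps(1)] cc by simp
    also have "\<dots> = M (M c w1) (M c (P k))" by (rule medV[OF cV cV w1V PV])
    also have "\<dots> = vscale (e * e ^ k) (M w1 (P k))" using eigM step.IH sl sr vscale_vscale
      by (simp add: mult.commute)
    finally show ?case using PS step by simp
  qed
  have main: "M (P a) (P m) = vscale (e powi (- (int (a - 1) * int (m - 1)))) (P (a + m))"
    if a: "a \<ge> 1" and m: "m \<ge> 1" for a m
    using m
  proof (induction m rule: dec_induct)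
    case base
    have "M (P a) (P 1) = P (Suc a)" using commM PS a P1 by simp
    then show ?case by simp
  next
    case (step m)
    define l where "l = e powi (- (int (a - 1) * int (m - 1)))"
    have "M (M c (P a)) (M w1 (P m)) = M (M c w1) (M (P a) (P m))"
      by (rule medV[OF cV PV w1V PV])
    then have "vscale (e ^ a) (M (P a) (P (Suc m))) = vscale (e * l) (P (Suc (a + m)))"
      using eigP[OF a] eigM step.IH sl sr vscale_vscale PS[OF step.hyps(1)] PS[of "a + m"] step.hyps
      by (simp add: l_def mult.commute)
    then have "vscale (e ^ a) (M (P a) (P (Suc m))) =
       vscale (e ^ a) (vscale (e powi (- (int (a - 1) * int (Suc m - 1)))) (P (a + Suc m)))"
    proof -
      have "e * l = e ^ a * e powi (- (int (a - 1) * int (Suc m - 1)))"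
      proof -
        have "e ^ a = e powi (int a)" by (simp add: power_int_of_nat)
        moreover have "e = e powi 1" by simp
        moreover have "int a + - (int (a - 1) * int (Suc m - 1)) = 1 + - (int (a - 1) * int (m - 1))"
          using a step.hyps by (simp add: of_nat_diff algebra_simps)
        ultimately show ?thesis unfolding l_def
          using power_int_add[of e "int a" "- (int (a - 1) * int (Suc m - 1))"]
            power_int_add[of e 1 "- (int (a - 1) * int (m - 1))"] e0 by metis
      qed
      then show ?thesis
        by (metis \<open>vscale (e ^ a) (M (P a) (P (Suc m))) = vscale (e * l) (P (Suc (a + m)))\<close>
            add_Suc_right vscale_vscale)
    qed
    then show ?case using vscale_cancel e0 by (metis power_not_zero)
  qed
  have red: "\<exists>s::nat. s \<le> n - 1 \<and> e powi z = e ^ s" for z :: int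
  proof -
    define r where "r = z mod int n"
    define q where "q = z div int n"
    have z: "z = int n * q + r" unfolding r_def q_def by simp
    have r0: "0 \<le> r" "r < int n" unfolding r_def using npos by auto
    have "e powi z = e powi (int n * q) * e powi r" using z power_int_add e0 by metis
    also have "e powi (int n * q) = 1" using en by (simp add: power_int_mult power_int_of_nat)
    also have "e powi r = e ^ nat r" using r0 by (metis int_nat_eq power_int_of_nat)
    finally show ?thesis using r0 by (intro exI[of _ "nat r"]) auto
  qed
  have part1: "\<exists>z::int. mon_eval M w1 \<alpha> = vscale (e powi z) (P (mon_deg \<alpha>))" for \<alpha>
  proof (induction \<alpha>)
    case Var
    then show ?case using P1 by (intro exI[of _ 0]) (simp add: vscale_def)
  next
    case (Prod a b)
    then obtain za zb where za: "mon_eval M w1 a = vscale (e powi za) (P (mon_deg a))"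
      and zb: "mon_eval M w1 b = vscale (e powi zb) (P (mon_deg b))" by blast
    have "mon_eval M w1 (Prod a b) =
        vscale (e powi za * e powi zb) (M (P (mon_deg a)) (P (mon_deg b)))"
      using za zb sl sr vscale_vscale by (simp add: mult.commute)
    also have "\<dots> = vscale (e powi (za + zb + - (int (mon_deg a - 1) * int (mon_deg b - 1))))
        (P (mon_deg (Prod a b)))"
    proof -
      define t where "t = - (int (mon_deg a - 1) * int (mon_deg b - 1))"
      have pa: "e powi (x + y) = e powi x * e powi y" for x y using e0 by (rule power_int_add[OF disjI1])
      have "e powi (za + zb + t) = e powi za * e powi zb * e powi t" unfolding pa ..
      then show ?thesis
        using main[OF mon_deg_pos mon_deg_pos, of a b] vscale_vscale unfolding t_def[symmetric]
        by simp
    qed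
    finally show ?case by blast
  qed
  show ?thesis
  proof (intro conjI allI impI)
    fix \<alpha>
    obtain z where z: "mon_eval M w1 \<alpha> = vscale (e powi z) (P (mon_deg \<alpha>))" using part1 by blast
    obtain s where s: "s \<le> n - 1" "e powi z = e ^ s" using red by blast
    show "\<exists>s::nat. s \<le> n - 1 \<and> mon_eval (amult gam n) w1 \<alpha> =
              vscale (cis (2 * pi / n) ^ s) (ppow (amult gam n) w1 (mon_deg \<alpha>))"
      using z s unfolding M_def e_def P_def by auto
  next
    fix k m :: nat
    assume "k \<ge> 1" "m \<ge> 1"
    then show "amult gam n (ppow (amult gam n) w1 k) (ppow (amult gam n) w1 m) =
              vscale (cis (2 * pi / n) powi (- (int (k - 1) * int (m - 1))))
                (ppow (amult gam n) w1 (k + m))"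
      using main unfolding M_def e_def P_def by blast
  qed
qed

end
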